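(* Consider the algorithm described in the context for solving the problem there, and let the problem assumption and the random-sample assumption hold. Define the auxiliary stochastic sequence $\{u_k\}$ by $u_0:=x_0$ and $$u_{k+1}\triangleq \mathcal{P}_X\left(u_k+N^{-1}\gamma_k({w}_{f,k}+e_{f,k}+\rho_k{w}_{F,k}+\rho_k{e}_{F,k})\right).$$ Then for any $y \in X$ and $k \geq 0$, \begin{align*} & (\gamma_k\rho_k)^rF(y)^T(y_{k+1}-y) + (\gamma_k\rho_k)^{r}\rho_k^{-1}(f(y_{k+1})-f(y)) \\ & \leq 0.5N(\gamma_k\rho_k)^{r-1}\left(\|x_k-y\|^2 -\|x_{k+1}-y\|^2+\|u_k-y\|^2-\|u_{k+1}-y\|^2\right) \\ &+2N^{-1}(\gamma_k\rho_k)^{r+1}\rho_k^{-2}\left(6C_f^2+3\|\tilde{w}_{f,k}\|^2+3\|\tilde{e}_{f,k}\|^2+4\|{w}_{f,k}\|^2+4\|e_{f,k}\|^2\right) \\ &+2N^{-1}(\gamma_k\rho_k)^{r+1}\left(6C_F^2+3\|\tilde{w}_{F,k}\|^2+3\|\tilde{e}_{F,k}\|^2+4\|{w}_{F,k}\|^2+4\|{e}_{F,k}\|^2\right) \\ &+\gamma_k^r\rho_k^{r-1}\left({w}_{f,k}+e_{f,k}+\rho_k{w}_{F,k}+\rho_k{e}_{F,k}\right)^T(u_k-y_{k+1}). \end{align*}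
   Context: Setting: $N\ge1$, positive integers $n_1,\dots,n_N$ with $n=\sum_i n_i$, sets $X_i\subseteq\mathbb R^{n_i}$, $X=\prod_{i=1}^N X_i$; $\mathcal P_X,\mathcal P_{X_i}$ are Euclidean projections. $\xi$ is a random vector on $(\Omega,\mathcal F,\mathbb P)$ with values in $\mathbb R^d$. $f:\mathbb R^n\times\mathbb R^d\to\mathbb R$, $F=(F_1,\dots,F_N):\mathbb R^n\times\mathbb R^d\to\mathbb R^n$ with $F_i$ valued in $\mathbb R^{n_i}$; $f(x):=\mathbb E[f(x,\xi)]$, $F(x):=\mathbb E[F(x,\xi)]$. Problem: minimize $f(x)$ subject to $x\in\mathrm{SOL}(X,F):=\{x\in X:(z-x)^TF(x)\ge0\ \forall z\in X\}$. $\tilde\nabla f(x)$ denotes a subgradient of $f$ at $x$ and $\tilde\nabla f(x,\xi)$ a stochastic subgradient; subscript $i$ denotes the $i$-th block. $\mathbf U_\ell\in\mathbb R^{n\times n_\ell}$ with $[\mathbf U_1,\dots,\mathbf U_N]=\mathbf I_n$. Problem assumption: (i) $F(\cdot)$ is single-valued, continuous and monotone on its domain; (ii) $f(\cdot)$ is real-valued and convex on its domain; (iii) $X\subseteq\mathrm{int}(\mathrm{dom}(F)\cap\mathrm{dom}(f))$ is nonempty, compact and convex (each $X_i$ closed convex). $C_F,C_f>0$ are constants with $\|F(x)\|\le C_F$ and $\|\tilde\nabla f(x)\|\le C_f$ for all $\tilde\nabla f(x)\in\partial f(x)$, $x\in X$. Algorithm: given $x_0,y_0\in X$, positive sequences $\{\gamma_k\},\{\rho_k\}$,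 a scalar $r<1$; for $k=0,1,\dots$: draw $i_k,\tilde i_k$ uniformly from $\{1,\dots,N\}$ and realizations $\xi_k,\tilde\xi_k$ of $\xi$; $y_{k+1}^{(i)}=\mathcal P_{X_i}\big(x_k^{(i)}-\gamma_k(\tilde\nabla_i f(x_k,\tilde\xi_k)+\rho_kF_i(x_k,\tilde\xi_k))\big)$ if $i=\tilde i_k$, else $y_{k+1}^{(i)}=x_k^{(i)}$; $x_{k+1}^{(i)}=\mathcal P_{X_i}\big(x_k^{(i)}-\gamma_k(\tilde\nabla_i f(y_{k+1},\xi_k)+\rho_kF_i(y_{k+1},\xi_k))\big)$ if $i=i_k$, else $x_{k+1}^{(i)}=x_k^{(i)}$. Errors: $\tilde w_{F,k}=F(x_k,\tilde\xi_k)-F(x_k)$, $\tilde w_{f,k}=\tilde\nabla f(x_k,\tilde\xi_k)-\tilde\nabla f(x_k)$, $w_{F,k}=F(y_{k+1},\xi_k)-F(y_{k+1})$, $w_{f,k}=\tilde\nabla f(y_{k+1},\xi_k)-\tilde\nabla f(y_{k+1})$, $\tilde e_{F,k}=N\mathbf U_{\tilde i_k}F_{\tilde i_k}(x_k,\tilde\xi_k)-F(x_k,\tilde\xi_k)$, $\tilde e_{f,k}=N\mathbf U_{\tilde i_k}\tilde\nabla_{\tilde i_k}f(x_k,\tilde\xi_k)-\tilde\nabla f(x_k,\tilde\xi_k)$, $e_{F,k}=N\mathbf U_{i_k}F_{i_k}(y_{k+1},\xi_k)-F(y_{k+1},\xi_k)$, $e_{f,k}=N\mathbf U_{i_k}\tilde\nabla_{i_k}f(y_{k+1},\xi_k)-\tilde\nabla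 f(y_{k+1},\xi_k)$. Random-sample assumption: (a) the $\tilde\xi_k,\xi_k$ are i.i.d. copies of $\xi$, the $\tilde i_k,i_k$ i.i.d. uniform on $\{1,\dots,N\}$, all mutually independent; (b) $F(\cdot,\tilde\xi_k)$, $F(\cdot,\xi_k)$ are unbiased for $F(\cdot)$ and $\tilde\nabla f(\cdot,\tilde\xi_k)$, $\tilde\nabla f(\cdot,\xi_k)$ unbiased for $\tilde\nabla f(\cdot)$; (c) there exist $\nu_F,\nu_f>0$ with $\mathbb E[\|F(x,\xi)-F(x)\|^2\mid x]\le\nu_F^2$ and $\mathbb E[\|\tilde\nabla f(x,\xi)-\tilde\nabla f(x)\|^2\mid x]\le\nu_f^2$. *)

theory Defs
  imports "HOL-Analysis.Analysis"
begin

text \<open>Block structure: coordinates of R^n are partitioned into blocks 1..N by a map blk.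
  blockproj blk i x is U_i U_i^T x, i.e. x with all coordinates outside block i set to 0;
  the block space R^{n_i} is identified with the vectors supported on block i.\<close>

definition blockproj :: "('n::finite \<Rightarrow> nat) \<Rightarrow> nat \<Rightarrow> real^'n \<Rightarrow> real^'n" where
  "blockproj blk i x = (\<chi> j. if blk j = i then x $ j else 0)"

end

theory Submission
  imports Defs
begin

lemma bp_add: "blockproj blk i (a + b) = blockproj blk i a + blockproj blk i b"
  by (simp add: blockproj_def vec_eq_iff)
lemma bp_diff: "blockproj blk i (a - b) = blockproj blk i a - blockproj blk i b"
  by (simp add: blockproj_def vec_eq_iff)
lemma bp_scale: "blockproj blk i (c *\<^sub>R a) = c *\<^sub>R blockproj blk i a"
  by (simp add: blockproj_def vec_eq_iff)
lemma bp_idem: "blockproj blk i (blockproj blk i a) = blockproj blk i a"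
  by (simp add: blockproj_def vec_eq_iff)
lemma bp_other: "j \<noteq> i \<Longrightarrow> blockproj blk j (blockproj blk i a) = 0"
  by (simp add: blockproj_def vec_eq_iff)
lemma bp_inner: "blockproj blk i a \<bullet> b = blockproj blk i a \<bullet> blockproj blk i b"
  unfolding blockproj_def inner_vec_def by (rule sum.cong) auto
lemma bp_supp: "v \<in> {v. \<forall>j. blk j \<noteq> i \<longrightarrow> v $ j = 0} \<Longrightarrow> blockproj blk i v = v"
  by (auto simp: blockproj_def vec_eq_iff)
lemma bp_supp0: "v \<in> {v. \<forall>j. blk j \<noteq> i \<longrightarrow> v $ j = 0} \<Longrightarrow> j \<noteq> i \<Longrightarrow> blockproj blk j v = 0"
  by (auto simp: blockproj_def vec_eq_iff)
lemma bp_linear: "linear (blockproj blk i)"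
  by (rule linearI) (simp_all add: bp_add bp_scale)

lemma proj_step:
  fixes x z G :: "real^'n"
  assumes S: "closed S" "convex S" "S \<noteq> {}" "S \<subseteq> {v. \<forall>j. blk j \<noteq> i \<longrightarrow> v $ j = 0}"
    and zS: "blockproj blk i z \<in> S"
    and x': "x' = x - blockproj blk i x + closest_point S (blockproj blk i (x - \<gamma> *\<^sub>R G))"
  shows "(norm (x' - z))\<^sup>2 \<le> (norm (x - z))\<^sup>2 - (norm (x - x'))\<^sup>2
           - 2 * \<gamma> * (blockproj blk i G \<bullet> (x' - z))"
proof -
  define B where "B = blockproj blk i"
  define v where "v = B (x - \<gamma> *\<^sub>R G)"
  define c where "c = closest_point S v"
  have cS: "c \<in> S" unfolding c_def using S closest_point_in_set by blast
  have Bc: "B c = c" using cS S(4) bp_supp unfolding B_def by blast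
  have x'': "x' = x - B x + c" using x' unfolding B_def c_def v_def by simp
  have dot: "(v - c) \<bullet> (B z - c) \<le> 0" unfolding c_def using closest_point_dot[OF S(2,1) zS[folded B_def]] .
  have id: "(norm (x' - z))\<^sup>2 = (norm (x - z))\<^sup>2 - (norm (x - x'))\<^sup>2 + 2 * ((x' - x) \<bullet> (x' - z))"
    by (simp add: power2_norm_eq_inner inner_diff inner_commute algebra_simps)
  have e1: "x' - x = B (c - x)" using Bc x'' by (simp add: B_def bp_diff)
  have e2: "B (x' - z) = c - B z" using Bc x'' by (simp add: B_def bp_diff bp_add bp_idem)
  have i1: "(x' - x) \<bullet> (x' - z) = (c - B x) \<bullet> (c - B z)"
    using bp_inner[of blk i "c - x" "x' - z"] e1 e2 Bc by (simp add: B_def bp_diff)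
  have vv: "v = B x - \<gamma> *\<^sub>R B G" unfolding v_def B_def by (simp add: bp_diff bp_scale)
  have i2: "(c - B x) \<bullet> (c - B z) \<le> - \<gamma> * (B G \<bullet> (c - B z))"
    using dot unfolding vv by (simp add: inner_diff inner_commute algebra_simps)
  have i3: "B G \<bullet> (c - B z) = B G \<bullet> (x' - z)"
    using bp_inner[of blk i G "x' - z"] e2 by (simp add: B_def)
  show ?thesis using id i1 i2 i3 unfolding B_def by simp
qed

lemma memX:
  assumes X_def: "X = {v. \<forall>i\<in>{1..N}. blockproj blk i v \<in> Xi i}"
    and Xi_sub: "\<forall>i\<in>{1..N}. Xi i \<subseteq> {v. \<forall>j. blk j \<noteq> i \<longrightarrow> v $ j = 0}"
    and x: "x \<in> X" and i: "i \<in> {1..N}" and c: "c \<in> Xi i"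
  shows "x - blockproj blk i x + c \<in> X"
proof -
  have cs: "c \<in> {v. \<forall>j. blk j \<noteq> i \<longrightarrow> v $ j = 0}" using Xi_sub i c by blast
  { fix j assume j: "j \<in> {1..N}"
    have "blockproj blk j (x - blockproj blk i x + c) \<in> Xi j"
    proof (cases "j = i")
      case True
      have "blockproj blk i (x - blockproj blk i x + c) = c"
        unfolding bp_add bp_diff bp_idem bp_supp[OF cs] by simp
      then show ?thesis using c True by simp
    next
      case False
      have "blockproj blk j (x - blockproj blk i x + c) = blockproj blk j x"
        unfolding bp_add bp_diff bp_other[OF False] bp_supp0[OF cs False] by simp
      moreover have "blockproj blk j x \<in> Xi j" using x j unfolding X_def by blast
      ultimately show ?thesis by simp
    qed }
  then show ?thesis using X_def by blast
qed

lemma ystep_bound: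
  fixes x G :: "real^'n"
  assumes S: "closed S" "convex S" "blockproj blk i x \<in> S" and g: "\<gamma> > 0"
    and y': "y' = x - blockproj blk i x + closest_point S (blockproj blk i (x - \<gamma> *\<^sub>R G))"
  shows "norm (x - y') \<le> \<gamma> * norm (blockproj blk i G)"
proof -
  have ne: "S \<noteq> {}" using S by blast
  have "dist (closest_point S (blockproj blk i (x - \<gamma> *\<^sub>R G))) (closest_point S (blockproj blk i x))
        \<le> dist (blockproj blk i (x - \<gamma> *\<^sub>R G)) (blockproj blk i x)"
    by (rule closest_point_lipschitz[OF S(2,1) ne])
  moreover have "closest_point S (blockproj blk i x) = blockproj blk i x" using closest_point_self[OF S(3)] .
  ultimately show ?thesis using y' g by (simp add: dist_norm bp_diff bp_scale norm_minus_commute)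
qed

lemma sos6: fixes a b c d e h :: real
  shows "(a+b+c+d+e+h)\<^sup>2 \<le> 6*(a\<^sup>2+b\<^sup>2+c\<^sup>2+d\<^sup>2+e\<^sup>2+h\<^sup>2)"
proof -
  have eq: "6*(a\<^sup>2+b\<^sup>2+c\<^sup>2+d\<^sup>2+e\<^sup>2+h\<^sup>2) - (a+b+c+d+e+h)\<^sup>2 = (a - b)\<^sup>2 + (a - c)\<^sup>2 + (a - d)\<^sup>2 + (a - e)\<^sup>2 + (a - h)\<^sup>2
      + (b - c)\<^sup>2 + (b - d)\<^sup>2 + (b - e)\<^sup>2 + (b - h)\<^sup>2
      + (c - d)\<^sup>2 + (c - e)\<^sup>2 + (c - h)\<^sup>2
      + (d - e)\<^sup>2 + (d - h)\<^sup>2 + (e - h)\<^sup>2" by algebra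
  have "0 \<le> (a - b)\<^sup>2 + (a - c)\<^sup>2 + (a - d)\<^sup>2 + (a - e)\<^sup>2 + (a - h)\<^sup>2
      + (b - c)\<^sup>2 + (b - d)\<^sup>2 + (b - e)\<^sup>2 + (b - h)\<^sup>2
      + (c - d)\<^sup>2 + (c - e)\<^sup>2 + (c - h)\<^sup>2
      + (d - e)\<^sup>2 + (d - h)\<^sup>2 + (e - h)\<^sup>2" by simp
  then show ?thesis using eq by linarith
qed
lemma sos4: fixes a b c d :: real
  shows "(a+b+c+d)\<^sup>2 \<le> 4*(a\<^sup>2+b\<^sup>2+c\<^sup>2+d\<^sup>2)"
proof -
  have eq: "4*(a\<^sup>2+b\<^sup>2+c\<^sup>2+d\<^sup>2) - (a+b+c+d)\<^sup>2 = (a - b)\<^sup>2 + (a - c)\<^sup>2 + (a - d)\<^sup>2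
      + (b - c)\<^sup>2 + (b - d)\<^sup>2 + (c - d)\<^sup>2" by algebra
  have "0 \<le> (a - b)\<^sup>2 + (a - c)\<^sup>2 + (a - d)\<^sup>2 + (b - c)\<^sup>2 + (b - d)\<^sup>2 + (c - d)\<^sup>2" by simp
  then show ?thesis using eq by linarith
qed

lemma sq4: fixes a b c d :: "'a::real_normed_vector"
  shows "(norm (a+b+c+d))\<^sup>2 \<le> 4*((norm a)\<^sup>2+(norm b)\<^sup>2+(norm c)\<^sup>2+(norm d)\<^sup>2)"
proof -
  have "norm (a+b+c+d) \<le> norm a + norm b + norm c + norm d"
    using norm_triangle_ineq[of a b] norm_triangle_ineq[of "a+b" c] norm_triangle_ineq[of "a+b+c" d]
    by linarith
  then have "(norm (a+b+c+d))\<^sup>2 \<le> (norm a + norm b + norm c + norm d)\<^sup>2"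
    by (simp add: power_mono)
  then show ?thesis using sos4[of "norm a" "norm b" "norm c" "norm d"] by linarith
qed

lemma sq6: fixes a b c d e h :: "'a::real_normed_vector"
  shows "(norm (a+b+c+d+e+h))\<^sup>2 \<le> 6*((norm a)\<^sup>2+(norm b)\<^sup>2+(norm c)\<^sup>2+(norm d)\<^sup>2+(norm e)\<^sup>2+(norm h)\<^sup>2)"
proof -
  have "norm (a+b+c+d+e+h) \<le> norm a + norm b + norm c + norm d + norm e + norm h"
    using norm_triangle_ineq[of a b] norm_triangle_ineq[of "a+b" c] norm_triangle_ineq[of "a+b+c" d]
      norm_triangle_ineq[of "a+b+c+d" e] norm_triangle_ineq[of "a+b+c+d+e" h]
    by linarith
  then have "(norm (a+b+c+d+e+h))\<^sup>2 \<le> (norm a + norm b + norm c + norm d + norm e + norm h)\<^sup>2"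
    by (simp add: power_mono)
  then show ?thesis using sos6[of "norm a" "norm b" "norm c" "norm d" "norm e" "norm h"] by linarith
qed

lemma final_alg:
  fixes g \<rho> n a d D Af AF wy r :: real
  assumes g: "g > 0" and rh: "\<rho> > 0" and n: "n \<ge> 1"
    and S: "(2*g/n)*(\<rho>*a + d) \<le> D + (g^2/n^2)*4*(Af + \<rho>^2*AF) + (2*g/n)*wy"
  shows "(g * \<rho>) powr r * a + (g * \<rho>) powr r / \<rho> * d
     \<le> 0.5 * n * (g * \<rho>) powr (r - 1) * D + 2 / n * (g * \<rho>) powr (r + 1) / \<rho>\<^sup>2 * Af
        + 2 / n * (g * \<rho>) powr (r + 1) * AF + g powr r * \<rho> powr (r - 1) * wy"
proof -
  define p where "p = (g * \<rho>) powr (r - 1)"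
  have gr: "g * \<rho> > 0" using g rh by simp
  have p0: "p > 0" unfolding p_def using g rh by simp
  have e1: "(g * \<rho>) powr r = p * (g * \<rho>)"
    unfolding p_def using g rh powr_add[of "g*\<rho>" "r-1" 1] by simp
  have e2: "(g * \<rho>) powr (r + 1) = p * (g * \<rho>)^2"
    unfolding p_def using g rh powr_add[of "g*\<rho>" "r-1" 2] by (simp add: powr_numeral add.commute)
  have e3: "g powr r * \<rho> powr (r - 1) = p * g"
  proof -
    have "p = g powr (r-1) * \<rho> powr (r-1)" unfolding p_def using g rh powr_mult by simp
    moreover have "g powr r = g powr (r-1) * g" using g powr_add[of g "r-1" 1] by simp
    ultimately show ?thesis by simp
  qed
  define K where "K = n / 2 * p"
  have K0: "K > 0" unfolding K_def using p0 n by simp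
  have "K * ((2*g/n)*(\<rho>*a + d)) \<le> K * (D + (g^2/n^2)*4*(Af + \<rho>^2*AF) + (2*g/n)*wy)"
    using S K0 by (intro mult_left_mono) auto
  moreover have "K * ((2*g/n)*(\<rho>*a + d)) = (g * \<rho>) powr r * a + (g * \<rho>) powr r / \<rho> * d"
    unfolding e1 K_def using n rh by (simp add: field_simps)
  moreover have "K * (D + (g^2/n^2)*4*(Af + \<rho>^2*AF) + (2*g/n)*wy) =
     0.5 * n * (g * \<rho>) powr (r - 1) * D + 2 / n * (g * \<rho>) powr (r + 1) / \<rho>\<^sup>2 * Af
        + 2 / n * (g * \<rho>) powr (r + 1) * AF + g powr r * \<rho> powr (r - 1) * wy"
    unfolding e2 e3 K_def p_def[symmetric] using n rh by (simp add: field_simps power2_eq_square)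
  ultimately show ?thesis by simp
qed
lemma combine:
  fixes g n \<rho> a d pz P2 Q2 W2 xs x1s us u1s wuz wyz wy Af AF :: real
  assumes g: "g > 0" and n: "n \<ge> 1"
    and h1: "2*(g/n)*pz \<le> xs - x1s + 2*(g/n)^2*P2 + (g/n)^2*Q2"
    and h2: "d + \<rho>*a + wyz \<le> pz"
    and h3: "u1s \<le> us + 2*(g/n)*wuz + (g/n)^2*W2"
    and h4: "wyz = wuz - wy"
    and h5: "2*P2 + Q2 + W2 \<le> 4*(Af + \<rho>^2*AF)"
  shows "(2*g/n)*(\<rho>*a + d) \<le> (xs - x1s + us - u1s) + (g^2/n^2)*4*(Af + \<rho>^2*AF) + (2*g/n)*wy"
proof -
  define c where "c = g/n"
  have c0: "c > 0" unfolding c_def using g n by simp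
  have e1: "2*g/n = 2*c" and e2: "g^2/n^2 = c^2" unfolding c_def by (simp_all add: power_divide)
  have m2: "2*c*(d + \<rho>*a + (wuz - wy)) \<le> 2*c*pz" using h2 h4 c0 by (intro mult_left_mono) auto
  have m5: "c^2*(2*P2 + Q2 + W2) \<le> c^2*(4*(Af + \<rho>^2*AF))" using h5 by (intro mult_left_mono) auto
  show ?thesis unfolding e1 e2 using h1 h3 m2 m5 unfolding c_def[symmetric]
    by (simp add: algebra_simps)
qed
theorem lemma6:
  fixes N :: nat
    and blk :: "'n::finite \<Rightarrow> nat"
    and Xi :: "nat \<Rightarrow> (real^'n) set"
    and X D :: "(real^'n) set"
    and f :: "real^'n \<Rightarrow> real"
    and F g :: "real^'n \<Rightarrow> real^'n"
    and Fs gs :: "real^'n \<Rightarrow> real^'d::finite \<Rightarrow> real^'n"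
    and CF Cf r :: real
    and \<gamma> \<rho> :: "nat \<Rightarrow> real"
    and it ii :: "nat \<Rightarrow> nat"
    and xit xi :: "nat \<Rightarrow> real^'d"
    and x y u :: "nat \<Rightarrow> real^'n"
    and wFt wft wF wf eFt eft eF ef :: "nat \<Rightarrow> real^'n"
    and z :: "real^'n" and k :: nat
  assumes N: "N \<ge> 1"
    and blk_range: "\<forall>j. blk j \<in> {1..N}"
    and blk_nonempty: "\<forall>i\<in>{1..N}. \<exists>j. blk j = i"
    and Xi_sub: "\<forall>i\<in>{1..N}. Xi i \<subseteq> {v. \<forall>j. blk j \<noteq> i \<longrightarrow> v $ j = 0}"
    and Xi_closed: "\<forall>i\<in>{1..N}. closed (Xi i)"
    and Xi_convex: "\<forall>i\<in>{1..N}. convex (Xi i)"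
    and X_def: "X = {v. \<forall>i\<in>{1..N}. blockproj blk i v \<in> Xi i}"
    and X_ne: "X \<noteq> {}"
    and X_compact: "compact X"
    and D_open: "open D"
    and X_D: "X \<subseteq> D"
    and F_cont: "continuous_on D F"
    and F_mono: "\<forall>a\<in>D. \<forall>b\<in>D. (F a - F b) \<bullet> (a - b) \<ge> 0"
    and f_convex: "convex_on D f"
    and g_subgrad: "\<forall>a\<in>D. \<forall>b\<in>D. f b \<ge> f a + g a \<bullet> (b - a)"
    and CF_pos: "CF > 0" and Cf_pos: "Cf > 0"
    and CF_bound: "\<forall>a\<in>X. norm (F a) \<le> CF"
    and Cf_bound: "\<forall>a\<in>X. \<forall>s. (\<forall>b\<in>D. f b \<ge> f a + s \<bullet> (b - a)) \<longrightarrow> norm s \<le> Cf"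
    and \<gamma>_pos: "\<forall>m. \<gamma> m > 0" and \<rho>_pos: "\<forall>m. \<rho> m > 0"
    and r: "r < 1"
    and it_range: "\<forall>m. it m \<in> {1..N}" and ii_range: "\<forall>m. ii m \<in> {1..N}"
    and x0: "x 0 \<in> X" and y0: "y 0 \<in> X"
    and y_step: "\<forall>m. y (Suc m) = x m - blockproj blk (it m) (x m)
        + closest_point (Xi (it m))
            (blockproj blk (it m) (x m - \<gamma> m *\<^sub>R (gs (x m) (xit m) + \<rho> m *\<^sub>R Fs (x m) (xit m))))"
    and x_step: "\<forall>m. x (Suc m) = x m - blockproj blk (ii m) (x m)
        + closest_point (Xi (ii m))
            (blockproj blk (ii m) (x m - \<gamma> m *\<^sub>R (gs (y (Suc m)) (xi m) + \<rho> m *\<^sub>R Fs (y (Suc m)) (xi m))))"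
    and wFt_def: "\<forall>m. wFt m = Fs (x m) (xit m) - F (x m)"
    and wft_def: "\<forall>m. wft m = gs (x m) (xit m) - g (x m)"
    and wF_def: "\<forall>m. wF m = Fs (y (Suc m)) (xi m) - F (y (Suc m))"
    and wf_def: "\<forall>m. wf m = gs (y (Suc m)) (xi m) - g (y (Suc m))"
    and eFt_def: "\<forall>m. eFt m = real N *\<^sub>R blockproj blk (it m) (Fs (x m) (xit m)) - Fs (x m) (xit m)"
    and eft_def: "\<forall>m. eft m = real N *\<^sub>R blockproj blk (it m) (gs (x m) (xit m)) - gs (x m) (xit m)"
    and eF_def: "\<forall>m. eF m = real N *\<^sub>R blockproj blk (ii m) (Fs (y (Suc m)) (xi m)) - Fs (y (Suc m)) (xi m)"
    and ef_def: "\<forall>m. ef m = real N *\<^sub>R blockproj blk (ii m) (gs (y (Suc m)) (xi m)) - gs (y (Suc m)) (xi m)"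
    and u0: "u 0 = x 0"
    and u_step: "\<forall>m. u (Suc m) = closest_point X
        (u m + (\<gamma> m / real N) *\<^sub>R (wf m + ef m + \<rho> m *\<^sub>R wF m + \<rho> m *\<^sub>R eF m))"
    and z_in: "z \<in> X"
  shows "(\<gamma> k * \<rho> k) powr r * (F z \<bullet> (y (Suc k) - z))
           + (\<gamma> k * \<rho> k) powr r / \<rho> k * (f (y (Suc k)) - f z)
         \<le> 0.5 * real N * (\<gamma> k * \<rho> k) powr (r - 1)
             * ((norm (x k - z))\<^sup>2 - (norm (x (Suc k) - z))\<^sup>2
                + (norm (u k - z))\<^sup>2 - (norm (u (Suc k) - z))\<^sup>2)
           + 2 / real N * (\<gamma> k * \<rho> k) powr (r + 1) / (\<rho> k)\<^sup>2
             * (6 * Cf\<^sup>2 + 3 * (norm (wft k))\<^sup>2 + 3 * (norm (eft k))\<^sup>2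
                + 4 * (norm (wf k))\<^sup>2 + 4 * (norm (ef k))\<^sup>2)
           + 2 / real N * (\<gamma> k * \<rho> k) powr (r + 1)
             * (6 * CF\<^sup>2 + 3 * (norm (wFt k))\<^sup>2 + 3 * (norm (eFt k))\<^sup>2
                + 4 * (norm (wF k))\<^sup>2 + 4 * (norm (eF k))\<^sup>2)
           + \<gamma> k powr r * \<rho> k powr (r - 1)
             * ((wf k + ef k + \<rho> k *\<^sub>R wF k + \<rho> k *\<^sub>R eF k) \<bullet> (u k - y (Suc k)))"
proof -
  have gk: "\<gamma> k > 0" using \<gamma>_pos by blast
  have rk: "\<rho> k > 0" using \<rho>_pos by blast
  have nN: "real N \<ge> 1" using N by simp
  have Xi_ne: "\<forall>i\<in>{1..N}. Xi i \<noteq> {}"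
  proof -
    obtain v where "v \<in> X" using X_ne by blast
    then show ?thesis unfolding X_def by blast
  qed
  have cpin: "closest_point (Xi i) v \<in> Xi i" if "i \<in> {1..N}" for i v
  proof (rule closest_point_in_set)
    show "closed (Xi i)" using Xi_closed that by blast
    show "Xi i \<noteq> {}" using Xi_ne that by blast
  qed
  have xX: "x m \<in> X" for m
  proof (induction m)
    case 0
    show ?case using x0 .
  next
    case (Suc m)
    have i: "ii m \<in> {1..N}" using ii_range by blast
    show ?case
      by (subst x_step[rule_format]) (rule memX[OF X_def Xi_sub Suc.IH i cpin[OF i]])
  qed
  have ik: "ii k \<in> {1..N}" using ii_range by blast
  have itk: "it k \<in> {1..N}" using it_range by blast
  have yX: "y (Suc k) \<in> X"
    by (subst y_step[rule_format]) (rule memX[OF X_def Xi_sub xX itk cpin[OF itk]])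
  let ?g = "\<gamma> k" and ?r = "\<rho> k" and ?y = "y (Suc k)" and ?x = "x k" and ?x1 = "x (Suc k)"
  let ?G = "gs ?y (xi k) + ?r *\<^sub>R Fs ?y (xi k)"
  let ?Gt = "gs ?x (xit k) + ?r *\<^sub>R Fs ?x (xit k)"
  let ?P = "blockproj blk (ii k) ?G"
  let ?Q = "blockproj blk (it k) ?Gt"
  let ?W = "wf k + ef k + ?r *\<^sub>R wF k + ?r *\<^sub>R eF k"
  let ?n = "real N"
  let ?Pn = "g ?y + ?r *\<^sub>R F ?y + ?W"
  let ?Qn = "g ?x + ?r *\<^sub>R F ?x + wft k + eft k + ?r *\<^sub>R wFt k + ?r *\<^sub>R eFt k"
  have zS: "blockproj blk (ii k) z \<in> Xi (ii k)" using z_in ik unfolding X_def by blast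
  have s1: "(norm (?x1 - z))\<^sup>2 \<le> (norm (?x - z))\<^sup>2 - (norm (?x - ?x1))\<^sup>2 - 2 * ?g * (?P \<bullet> (?x1 - z))"
    by (rule proj_step[OF Xi_closed[rule_format, OF ik] Xi_convex[rule_format, OF ik]
          Xi_ne[rule_format, OF ik] Xi_sub[rule_format, OF ik] zS x_step[rule_format]])
  have xB: "blockproj blk (it k) ?x \<in> Xi (it k)" using xX[of k] itk unfolding X_def by blast
  have s4: "norm (?x - ?y) \<le> ?g * norm ?Q"
    by (rule ystep_bound[OF Xi_closed[rule_format, OF itk] Xi_convex[rule_format, OF itk] xB gk
          y_step[rule_format]])
  have NP: "?n *\<^sub>R ?P = ?Pn"
    by (simp add: wf_def ef_def wF_def eF_def bp_add bp_scale algebra_simps)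
  have NQ: "?n *\<^sub>R ?Q = ?Qn"
    by (simp add: wft_def eft_def wFt_def eFt_def bp_add bp_scale algebra_simps)
  have XI: "X = (\<Inter>i\<in>{1..N}. blockproj blk i -` Xi i)" unfolding X_def by auto
  have convX: "convex X" unfolding XI
    by (rule convex_INT) (rule convex_linear_vimage[OF bp_linear], use Xi_convex in blast)
  have closedX: "closed X" using X_compact compact_imp_closed by blast
  have s5: "norm (u (Suc k) - z) \<le> norm (u k + (?g / ?n) *\<^sub>R ?W - z)"
    using closest_point_lipschitz[OF convX closedX X_ne, of "u k + (?g / ?n) *\<^sub>R ?W" z]
      closest_point_self[OF z_in] u_step by (simp add: dist_norm)
  have yD: "?y \<in> D" and zD: "z \<in> D" and xD: "?x \<in> D" using yX z_in xX X_D by auto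
  have sub: "f z \<ge> f ?y + g ?y \<bullet> (z - ?y)" using g_subgrad yD zD by blast
  have mon: "(F ?y - F z) \<bullet> (?y - z) \<ge> 0" using F_mono yD zD by blast
  have bgy: "norm (g ?y) \<le> Cf" using Cf_bound yX g_subgrad yD by blast
  have bgx: "norm (g ?x) \<le> Cf" using Cf_bound xX g_subgrad xD by blast
  have bFy: "norm (F ?y) \<le> CF" using CF_bound yX by blast
  have bFx: "norm (F ?x) \<le> CF" using CF_bound xX by blast
  have a1: "0 \<le> (norm (?x - ?x1))\<^sup>2 + 2*?g*(?P \<bullet> (?x1 - ?x)) + ?g\<^sup>2*(norm ?P)\<^sup>2"
  proof -
    have "(norm (?x1 - ?x + ?g *\<^sub>R ?P))\<^sup>2 = (norm (?x - ?x1))\<^sup>2 + 2*?g*(?P \<bullet> (?x1 - ?x)) + ?g\<^sup>2*(norm ?P)\<^sup>2"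
      unfolding power2_norm_eq_inner
      by (simp add: inner_add_left inner_add_right inner_diff_left inner_diff_right inner_commute
          algebra_simps power2_eq_square)
    then show ?thesis by (metis zero_le_power2)
  qed
  have a2: "- (2*?g*(?P \<bullet> (?x - ?y))) \<le> ?g\<^sup>2 * (2 * norm ?P * norm ?Q)"
  proof -
    have "?P \<bullet> (?y - ?x) \<le> norm ?P * norm (?y - ?x)" by (rule norm_cauchy_schwarz)
    also have "\<dots> \<le> norm ?P * (?g * norm ?Q)"
      using s4 by (intro mult_left_mono) (auto simp: norm_minus_commute)
    finally have "- (?P \<bullet> (?x - ?y)) \<le> norm ?P * (?g * norm ?Q)"
      by (simp add: inner_diff_right)
    then have "2*?g*(- (?P \<bullet> (?x - ?y))) \<le> 2*?g*(norm ?P * (?g * norm ?Q))"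
      using gk by (intro mult_left_mono) auto
    then show ?thesis by (simp add: algebra_simps power2_eq_square)
  qed
  have a3: "?g\<^sup>2 * (2 * norm ?P * norm ?Q) \<le> ?g\<^sup>2 * (norm ?P)\<^sup>2 + ?g\<^sup>2 * (norm ?Q)\<^sup>2"
  proof -
    have "2 * norm ?P * norm ?Q \<le> (norm ?P)\<^sup>2 + (norm ?Q)\<^sup>2"
      using sum_squares_bound[of "norm ?P" "norm ?Q"] by (simp add: power2_eq_square algebra_simps)
    then have "?g\<^sup>2 * (2 * norm ?P * norm ?Q) \<le> ?g\<^sup>2 * ((norm ?P)\<^sup>2 + (norm ?Q)\<^sup>2)"
      by (intro mult_left_mono) auto
    then show ?thesis by (simp add: distrib_left)
  qed
  have spl: "2*?g*(?P \<bullet> (?x1 - z)) = 2*?g*(?P \<bullet> (?x1 - ?x)) + 2*?g*(?P \<bullet> (?x - ?y)) + 2*?g*(?P \<bullet> (?y - z))"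
    by (simp add: inner_diff_right algebra_simps)
  have A: "2*?g*(?P \<bullet> (?y - z)) \<le> (norm (?x - z))\<^sup>2 - (norm (?x1 - z))\<^sup>2 + 2*?g\<^sup>2*(norm ?P)\<^sup>2 + ?g\<^sup>2*(norm ?Q)\<^sup>2"
    using s1 a1 a2 a3 spl by linarith
  have Pdef: "?P = (1 / ?n) *\<^sub>R ?Pn"
  proof -
    have "(1 / ?n) *\<^sub>R (?n *\<^sub>R ?P) = ?P" using nN by simp
    then show ?thesis unfolding NP by simp
  qed
  have Qdef: "?Q = (1 / ?n) *\<^sub>R ?Qn"
  proof -
    have "(1 / ?n) *\<^sub>R (?n *\<^sub>R ?Q) = ?Q" using nN by simp
    then show ?thesis unfolding NQ by simp
  qed
  have h1: "2*(?g/?n)*(?Pn \<bullet> (?y - z)) \<le> (norm (?x - z))\<^sup>2 - (norm (?x1 - z))\<^sup>2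
        + 2*(?g/?n)^2*(norm ?Pn)\<^sup>2 + (?g/?n)^2*(norm ?Qn)\<^sup>2"
    using A unfolding Pdef Qdef using nN by (simp add: power_divide power_mult_distrib)
  have h2: "(f ?y - f z) + ?r*(F z \<bullet> (?y - z)) + ?W \<bullet> (?y - z) \<le> ?Pn \<bullet> (?y - z)"
  proof -
    have "f ?y - f z \<le> g ?y \<bullet> (?y - z)" using sub by (simp add: inner_diff_right)
    moreover have "?r*(F z \<bullet> (?y - z)) \<le> ?r*(F ?y \<bullet> (?y - z))"
      using mon rk by (intro mult_left_mono) (auto simp: inner_diff_left)
    ultimately show ?thesis by (simp add: inner_add_left)
  qed
  have h3: "(norm (u (Suc k) - z))\<^sup>2 \<le> (norm (u k - z))\<^sup>2 + 2*(?g/?n)*(?W \<bullet> (u k - z)) + (?g/?n)^2*(norm ?W)\<^sup>2"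
  proof -
    have "(norm (u (Suc k) - z))\<^sup>2 \<le> (norm (u k + (?g / ?n) *\<^sub>R ?W - z))\<^sup>2"
      using s5 by (simp add: power_mono)
    also have "(norm (u k + (?g / ?n) *\<^sub>R ?W - z))\<^sup>2 = (norm ((u k - z) + (?g / ?n) *\<^sub>R ?W))\<^sup>2"
      by (simp add: algebra_simps)
    also have "\<dots> = (norm (u k - z))\<^sup>2 + 2*(?g/?n)*(?W \<bullet> (u k - z)) + (?g/?n)^2*(norm ?W)\<^sup>2"
      unfolding power2_norm_eq_inner
      by (simp add: inner_add_left inner_add_right inner_commute algebra_simps power2_eq_square)
    finally show ?thesis .
  qed
  have h4: "?W \<bullet> (?y - z) = ?W \<bullet> (u k - z) - ?W \<bullet> (u k - ?y)" by (simp add: inner_diff_right)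
  have h5: "2*(norm ?Pn)\<^sup>2 + (norm ?Qn)\<^sup>2 + (norm ?W)\<^sup>2
      \<le> 4*((6 * Cf\<^sup>2 + 3 * (norm (wft k))\<^sup>2 + 3 * (norm (eft k))\<^sup>2
                + 4 * (norm (wf k))\<^sup>2 + 4 * (norm (ef k))\<^sup>2)
         + ?r^2*(6 * CF\<^sup>2 + 3 * (norm (wFt k))\<^sup>2 + 3 * (norm (eFt k))\<^sup>2
                + 4 * (norm (wF k))\<^sup>2 + 4 * (norm (eF k))\<^sup>2))"
  proof -
    have Pe: "?Pn = g ?y + ?r *\<^sub>R F ?y + wf k + ef k + ?r *\<^sub>R wF k + ?r *\<^sub>R eF k" by (simp add: add.assoc)
    have p1: "(norm ?Pn)\<^sup>2 \<le> 6*((norm (g ?y))\<^sup>2 + ?r^2*(norm (F ?y))\<^sup>2 + (norm (wf k))\<^sup>2 + (norm (ef k))\<^sup>2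
        + ?r^2*(norm (wF k))\<^sup>2 + ?r^2*(norm (eF k))\<^sup>2)"
      unfolding Pe using sq6[of "g ?y" "?r *\<^sub>R F ?y" "wf k" "ef k" "?r *\<^sub>R wF k" "?r *\<^sub>R eF k"] rk
      by (simp add: power_mult_distrib)
    have p2: "(norm ?Qn)\<^sup>2 \<le> 6*((norm (g ?x))\<^sup>2 + ?r^2*(norm (F ?x))\<^sup>2 + (norm (wft k))\<^sup>2 + (norm (eft k))\<^sup>2
        + ?r^2*(norm (wFt k))\<^sup>2 + ?r^2*(norm (eFt k))\<^sup>2)"
      using sq6[of "g ?x" "?r *\<^sub>R F ?x" "wft k" "eft k" "?r *\<^sub>R wFt k" "?r *\<^sub>R eFt k"] rk
      by (simp add: power_mult_distrib)
    have p3: "(norm ?W)\<^sup>2 \<le> 4*((norm (wf k))\<^sup>2 + (norm (ef k))\<^sup>2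
        + ?r^2*(norm (wF k))\<^sup>2 + ?r^2*(norm (eF k))\<^sup>2)"
      using sq4[of "wf k" "ef k" "?r *\<^sub>R wF k" "?r *\<^sub>R eF k"] rk
      by (simp add: power_mult_distrib)
    have q1: "(norm (g ?y))\<^sup>2 \<le> Cf\<^sup>2" "(norm (g ?x))\<^sup>2 \<le> Cf\<^sup>2"
      using bgy bgx by (simp_all add: power_mono)
    have q2: "(norm (F ?y))\<^sup>2 \<le> CF\<^sup>2" "(norm (F ?x))\<^sup>2 \<le> CF\<^sup>2"
      using bFy bFx by (simp_all add: power_mono)
    have q3: "?r^2*(norm (F ?y))\<^sup>2 \<le> ?r^2*CF\<^sup>2" "?r^2*(norm (F ?x))\<^sup>2 \<le> ?r^2*CF\<^sup>2"
      using q2 by (simp_all add: mult_left_mono)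
    have nn: "0 \<le> Cf\<^sup>2" "0 \<le> ?r^2*CF\<^sup>2" "0 \<le> (norm (wft k))\<^sup>2" "0 \<le> (norm (eft k))\<^sup>2"
       "0 \<le> ?r^2*(norm (wFt k))\<^sup>2" "0 \<le> ?r^2*(norm (eFt k))\<^sup>2" by simp_all
    have ex: "4*((6 * Cf\<^sup>2 + 3 * (norm (wft k))\<^sup>2 + 3 * (norm (eft k))\<^sup>2
                + 4 * (norm (wf k))\<^sup>2 + 4 * (norm (ef k))\<^sup>2)
         + ?r^2*(6 * CF\<^sup>2 + 3 * (norm (wFt k))\<^sup>2 + 3 * (norm (eFt k))\<^sup>2
                + 4 * (norm (wF k))\<^sup>2 + 4 * (norm (eF k))\<^sup>2))
      = 24 * Cf\<^sup>2 + 12 * (norm (wft k))\<^sup>2 + 12 * (norm (eft k))\<^sup>2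
                + 16 * (norm (wf k))\<^sup>2 + 16 * (norm (ef k))\<^sup>2
         + 24 * (?r^2*CF\<^sup>2) + 12 * (?r^2*(norm (wFt k))\<^sup>2) + 12 * (?r^2*(norm (eFt k))\<^sup>2)
                + 16 * (?r^2*(norm (wF k))\<^sup>2) + 16 * (?r^2*(norm (eF k))\<^sup>2)"
      by (simp add: algebra_simps)
    show ?thesis unfolding ex using p1 p2 p3 q1 q3 nn by (smt (verit))
  qed
  have S: "(2*?g/?n)*(?r*(F z \<bullet> (?y - z)) + (f ?y - f z))
      \<le> ((norm (?x - z))\<^sup>2 - (norm (?x1 - z))\<^sup>2 + (norm (u k - z))\<^sup>2 - (norm (u (Suc k) - z))\<^sup>2)
        + (?g^2/?n^2)*4*((6 * Cf\<^sup>2 + 3 * (norm (wft k))\<^sup>2 + 3 * (norm (eft k))\<^sup>2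
                + 4 * (norm (wf k))\<^sup>2 + 4 * (norm (ef k))\<^sup>2)
         + ?r^2*(6 * CF\<^sup>2 + 3 * (norm (wFt k))\<^sup>2 + 3 * (norm (eFt k))\<^sup>2
                + 4 * (norm (wF k))\<^sup>2 + 4 * (norm (eF k))\<^sup>2))
        + (2*?g/?n)*(?W \<bullet> (u k - ?y))"
    by (rule combine[OF gk nN h1 h2 h3 h4 h5])
  show ?thesis by (rule final_alg[OF gk rk nN S])
qed

end
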